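(* Let $\mathcal T$ be a theory of $\mathsf{LGI}$ consisting of graded implications and let $\zeta\Rightarrow_e\eta$ be a graded implication. If $\mathcal T\models\zeta\Rightarrow_e\eta$, then $\mathcal T\vdash_{\mathsf{LGI}}\zeta\Rightarrow_t\eta$ for every $t\in[0,1]$ with $t<e$.
   Context: Fix a continuous t-norm $\odot$ on $[0,1]$ and let $c\oplus d = 1-((1-c)\odot(1-d))$. Write $c\odot_{\L} d=\max(c+d-1,0)$, $c\oplus_{\L} d=\min(c+d,1)$. Syntax of $\mathsf{LGI}$: countably many variables $\phi_0,\phi_1,\dots$ and constants $\bot,\top$. Basic expressions are built from variables and constants by binary $\land,\lor,\odot$ and unary $\sim$. A graded implication is written $\alpha\Rightarrow_c\beta$ with $\alpha,\beta$ basic expressions, $c\in[0,1]$. Formulas are built from graded implications by classical $\land,\lor,\lnot$; $\Phi\to\Psi$ abbreviates $\lnot\Phi\lor\Psi$. A theory is a set of formulas. Semantics: an evaluation is a map $v$ from basic expressions to $[0,1]$ with $v(\bot)=0$, $v(\top)=1$, interpreting $\land$ by min, $\lor$ by max, $\odot$ by the t-norm $\odot$, and $\sim$ by $x\mapsto 1-x$. $v$ satisfies $\alpha\Rightarrow_c\beta$ iff $v(\alpha)\le v(\beta)+1-c$; satisfaction extends classically to all formulas. $\mathcal T\models\Phi$ means every evaluation satisfying all elements of $\mathcal T$ satisfies $\Phi$. Calculus $\mathsf{LGI}$: axioms are (i) all substitution instances (by graded implications) of classical propositional tautologies; (ii) for all basic expressions $\alpha,\beta,\gamma$ and $c,d\in[0,1]$: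 ($\land_1$) $(\alpha\Rightarrow_d\beta)\land(\alpha\Rightarrow_d\gamma)\to(\alpha\Rightarrow_d\beta\land\gamma)$; ($\land_2$) $\alpha\land\beta\Rightarrow_1\alpha$; ($\land_3$) $\alpha\land\beta\Rightarrow_1\beta$; ($\lor_1$) $(\alpha\Rightarrow_d\gamma)\land(\beta\Rightarrow_d\gamma)\to(\alpha\lor\beta\Rightarrow_d\gamma)$; ($\lor_2$) $\alpha\Rightarrow_1\alpha\lor\beta$; ($\lor_3$) $\beta\Rightarrow_1\alpha\lor\beta$; ($\odot_1$) $(\top\Rightarrow_c\alpha)\land(\top\Rightarrow_d\beta)\to(\top\Rightarrow_{c\odot d}\alpha\odot\beta)$; ($\odot_2$) $(\alpha\Rightarrow_c\bot)\land(\beta\Rightarrow_d\bot)\to(\alpha\odot\beta\Rightarrow_{c\oplus d}\bot)$; ($\odot_3$) $\top\Rightarrow_1\top\odot\top$; ($\sim_1$) $(\alpha\Rightarrow_d\beta)\to(\sim\beta\Rightarrow_d\sim\alpha)$; ($\sim_2$) $\sim\sim\alpha\Rightarrow_1\alpha$; ($\sim_3$) $\alpha\Rightarrow_1\sim\sim\alpha$; ($\top$) $\alpha\Rightarrow_1\top$; ($\bot$) $\bot\Rightarrow_1\alpha$; (0) $\alpha\Rightarrow_0\beta$; ($c$) $\alpha\Rightarrow_c\alpha$; (inkons) $\lnot(\top\Rightarrow_c\bot)$ for $c>0$; (trans$_1$) $(\alpha\Rightarrow_c\beta)\land(\beta\Rightarrow_d\gamma)\to(\alpha\Rightarrow_{c\odot_{\L}d}\gamma)$;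 (trans$_2$) $(\alpha\Rightarrow_c\bot)\land(\top\Rightarrow_d\beta)\to(\alpha\Rightarrow_{c\oplus_{\L}d}\beta)$; (lin$_1$) $(\alpha\Rightarrow_1\beta)\lor(\beta\Rightarrow_1\alpha)$; (lin$_2$) $(\top\Rightarrow_d\alpha)\lor(\alpha\Rightarrow_{1-d}\bot)$. The only rule is modus ponens. $\mathcal T\vdash_{\mathsf{LGI}}\Phi$ means $\Phi$ has a finite derivation from axioms and elements of $\mathcal T$ by modus ponens. *)

theory Defs
  imports "HOL-Analysis.Analysis"
begin

definition is_tnorm :: "(real \<Rightarrow> real \<Rightarrow> real) \<Rightarrow> bool" where
  "is_tnorm tn \<longleftrightarrow>
     (\<forall>x\<in>{0..1}. \<forall>y\<in>{0..1}. tn x y \<in> {0..1}) \<and>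
     (\<forall>x\<in>{0..1}. \<forall>y\<in>{0..1}. tn x y = tn y x) \<and>
     (\<forall>x\<in>{0..1}. \<forall>y\<in>{0..1}. \<forall>z\<in>{0..1}. tn (tn x y) z = tn x (tn y z)) \<and>
     (\<forall>x\<in>{0..1}. \<forall>y\<in>{0..1}. \<forall>z\<in>{0..1}. x \<le> y \<longrightarrow> tn x z \<le> tn y z) \<and>
     (\<forall>x\<in>{0..1}. tn x 1 = x)"

definition is_cont_tnorm :: "(real \<Rightarrow> real \<Rightarrow> real) \<Rightarrow> bool" where
  "is_cont_tnorm tn \<longleftrightarrow> is_tnorm tn \<and>
     continuous_on ({0..1} \<times> {0..1}) (\<lambda>(x, y). tn x y)"

definition tconorm :: "(real \<Rightarrow> real \<Rightarrow> real) \<Rightarrow> real \<Rightarrow> real \<Rightarrow> real" where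
  "tconorm tn c d = 1 - tn (1 - c) (1 - d)"

definition luk_and :: "real \<Rightarrow> real \<Rightarrow> real" where
  "luk_and c d = max (c + d - 1) 0"

definition luk_or :: "real \<Rightarrow> real \<Rightarrow> real" where
  "luk_or c d = min (c + d) 1"

datatype bexp = Var nat | Bot | Top
  | BAnd bexp bexp | BOr bexp bexp | BTn bexp bexp | BNeg bexp

text \<open>Formulas: graded implications \<open>GI \<alpha> c \<beta>\<close> (meaning \<open>\<alpha> \<Rightarrow>\<^sub>c \<beta>\<close>) combined classically.\<close>
datatype fml = GI bexp real bexp | FAnd fml fml | FOr fml fml | FNot fml

definition FImp :: "fml \<Rightarrow> fml \<Rightarrow> fml" where
  "FImp \<Phi> \<Psi> = FOr (FNot \<Phi>) \<Psi>"

fun wf :: "fml \<Rightarrow> bool" where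
  "wf (GI \<alpha> c \<beta>) \<longleftrightarrow> c \<in> {0..1}"
| "wf (FAnd \<Phi> \<Psi>) \<longleftrightarrow> wf \<Phi> \<and> wf \<Psi>"
| "wf (FOr \<Phi> \<Psi>) \<longleftrightarrow> wf \<Phi> \<and> wf \<Psi>"
| "wf (FNot \<Phi>) \<longleftrightarrow> wf \<Phi>"

fun eval :: "(real \<Rightarrow> real \<Rightarrow> real) \<Rightarrow> (nat \<Rightarrow> real) \<Rightarrow> bexp \<Rightarrow> real" where
  "eval tn a (Var n) = a n"
| "eval tn a Bot = 0"
| "eval tn a Top = 1"
| "eval tn a (BAnd x y) = min (eval tn a x) (eval tn a y)"
| "eval tn a (BOr x y) = max (eval tn a x) (eval tn a y)"
| "eval tn a (BTn x y) = tn (eval tn a x) (eval tn a y)"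
| "eval tn a (BNeg x) = 1 - eval tn a x"

fun sat :: "(real \<Rightarrow> real \<Rightarrow> real) \<Rightarrow> (nat \<Rightarrow> real) \<Rightarrow> fml \<Rightarrow> bool" where
  "sat tn a (GI \<alpha> c \<beta>) \<longleftrightarrow> eval tn a \<alpha> \<le> eval tn a \<beta> + 1 - c"
| "sat tn a (FAnd \<Phi> \<Psi>) \<longleftrightarrow> sat tn a \<Phi> \<and> sat tn a \<Psi>"
| "sat tn a (FOr \<Phi> \<Psi>) \<longleftrightarrow> sat tn a \<Phi> \<or> sat tn a \<Psi>"
| "sat tn a (FNot \<Phi>) \<longleftrightarrow> \<not> sat tn a \<Phi>"

definition entails :: "(real \<Rightarrow> real \<Rightarrow> real) \<Rightarrow> fml set \<Rightarrow> fml \<Rightarrow> bool" where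
  "entails tn T \<Phi> \<longleftrightarrow>
     (\<forall>a. (\<forall>n. a n \<in> {0..1}) \<longrightarrow> (\<forall>\<Psi>\<in>T. sat tn a \<Psi>) \<longrightarrow> sat tn a \<Phi>)"

fun bval :: "(bexp \<Rightarrow> real \<Rightarrow> bexp \<Rightarrow> bool) \<Rightarrow> fml \<Rightarrow> bool" where
  "bval V (GI \<alpha> c \<beta>) = V \<alpha> c \<beta>"
| "bval V (FAnd \<Phi> \<Psi>) \<longleftrightarrow> bval V \<Phi> \<and> bval V \<Psi>"
| "bval V (FOr \<Phi> \<Psi>) \<longleftrightarrow> bval V \<Phi> \<or> bval V \<Psi>"
| "bval V (FNot \<Phi>) \<longleftrightarrow> \<not> bval V \<Phi>"

text \<open>Substitution instances (by graded implications) of classical tautologies are exactly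
  the well-formed formulas that are true under every valuation of their graded-implication atoms.\<close>
definition taut_inst :: "fml \<Rightarrow> bool" where
  "taut_inst \<Phi> \<longleftrightarrow> wf \<Phi> \<and> (\<forall>V. bval V \<Phi>)"

inductive lgi_axiom :: "(real \<Rightarrow> real \<Rightarrow> real) \<Rightarrow> fml \<Rightarrow> bool" for tn where
  taut: "taut_inst \<Phi> \<Longrightarrow> lgi_axiom tn \<Phi>"
| and1: "d \<in> {0..1} \<Longrightarrow> lgi_axiom tn
    (FImp (FAnd (GI \<alpha> d \<beta>) (GI \<alpha> d \<gamma>)) (GI \<alpha> d (BAnd \<beta> \<gamma>)))"
| and2: "lgi_axiom tn (GI (BAnd \<alpha> \<beta>) 1 \<alpha>)"
| and3: "lgi_axiom tn (GI (BAnd \<alpha> \<beta>) 1 \<beta>)"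
| or1: "d \<in> {0..1} \<Longrightarrow> lgi_axiom tn
    (FImp (FAnd (GI \<alpha> d \<gamma>) (GI \<beta> d \<gamma>)) (GI (BOr \<alpha> \<beta>) d \<gamma>))"
| or2: "lgi_axiom tn (GI \<alpha> 1 (BOr \<alpha> \<beta>))"
| or3: "lgi_axiom tn (GI \<beta> 1 (BOr \<alpha> \<beta>))"
| tn1: "c \<in> {0..1} \<Longrightarrow> d \<in> {0..1} \<Longrightarrow> lgi_axiom tn
    (FImp (FAnd (GI Top c \<alpha>) (GI Top d \<beta>)) (GI Top (tn c d) (BTn \<alpha> \<beta>)))"
| tn2: "c \<in> {0..1} \<Longrightarrow> d \<in> {0..1} \<Longrightarrow> lgi_axiom tn
    (FImp (FAnd (GI \<alpha> c Bot) (GI \<beta> d Bot)) (GI (BTn \<alpha> \<beta>) (tconorm tn c d) Bot))"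
| tn3: "lgi_axiom tn (GI Top 1 (BTn Top Top))"
| neg1: "d \<in> {0..1} \<Longrightarrow> lgi_axiom tn (FImp (GI \<alpha> d \<beta>) (GI (BNeg \<beta>) d (BNeg \<alpha>)))"
| neg2: "lgi_axiom tn (GI (BNeg (BNeg \<alpha>)) 1 \<alpha>)"
| neg3: "lgi_axiom tn (GI \<alpha> 1 (BNeg (BNeg \<alpha>)))"
| top: "lgi_axiom tn (GI \<alpha> 1 Top)"
| bot: "lgi_axiom tn (GI Bot 1 \<alpha>)"
| zero: "lgi_axiom tn (GI \<alpha> 0 \<beta>)"
| refl: "c \<in> {0..1} \<Longrightarrow> lgi_axiom tn (GI \<alpha> c \<alpha>)"
| inkons: "c \<in> {0..1} \<Longrightarrow> c > 0 \<Longrightarrow> lgi_axiom tn (FNot (GI Top c Bot))"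
| trans1: "c \<in> {0..1} \<Longrightarrow> d \<in> {0..1} \<Longrightarrow> lgi_axiom tn
    (FImp (FAnd (GI \<alpha> c \<beta>) (GI \<beta> d \<gamma>)) (GI \<alpha> (luk_and c d) \<gamma>))"
| trans2: "c \<in> {0..1} \<Longrightarrow> d \<in> {0..1} \<Longrightarrow> lgi_axiom tn
    (FImp (FAnd (GI \<alpha> c Bot) (GI Top d \<beta>)) (GI \<alpha> (luk_or c d) \<beta>))"
| lin1: "lgi_axiom tn (FOr (GI \<alpha> 1 \<beta>) (GI \<beta> 1 \<alpha>))"
| lin2: "d \<in> {0..1} \<Longrightarrow> lgi_axiom tn (FOr (GI Top d \<alpha>) (GI \<alpha> (1 - d) Bot))"

inductive lgi_deriv :: "(real \<Rightarrow> real \<Rightarrow> real) \<Rightarrow> fml set \<Rightarrow> fml \<Rightarrow> bool" for tn T where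
  ax: "lgi_axiom tn \<Phi> \<Longrightarrow> lgi_deriv tn T \<Phi>"
| hyp: "\<Phi> \<in> T \<Longrightarrow> lgi_deriv tn T \<Phi>"
| mp: "lgi_deriv tn T \<Phi> \<Longrightarrow> lgi_deriv tn T (FImp \<Phi> \<Psi>) \<Longrightarrow> lgi_deriv tn T \<Psi>"

end

theory Submission
  imports Defs
begin


lemma tnorm_range: "is_tnorm tn \<Longrightarrow> x \<in> {0..1} \<Longrightarrow> y \<in> {0..1} \<Longrightarrow> tn x y \<in> {0..1}"
  unfolding is_tnorm_def by blast

lemma ax_wf: "lgi_axiom tn \<Phi> \<Longrightarrow> is_tnorm tn \<Longrightarrow> wf \<Phi>"
proof (induction rule: lgi_axiom.induct)
  case (tn1 c d \<alpha> \<beta>)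
  then show ?case using tnorm_range[of tn c d] by (simp add: FImp_def)
next
  case (tn2 c d \<alpha> \<beta>)
  then show ?case using tnorm_range[of tn "1-c" "1-d"] by (simp add: FImp_def tconorm_def)
qed (auto simp: taut_inst_def FImp_def luk_and_def luk_or_def)

lemma deriv_wf: "lgi_deriv tn S \<Phi> \<Longrightarrow> is_tnorm tn \<Longrightarrow> \<forall>\<Psi>\<in>S. wf \<Psi> \<Longrightarrow> wf \<Phi>"
  by (induction rule: lgi_deriv.induct) (auto simp: ax_wf FImp_def)

lemma deriv_mono: "lgi_deriv tn S \<Phi> \<Longrightarrow> S \<subseteq> S' \<Longrightarrow> lgi_deriv tn S' \<Phi>"
  by (induction rule: lgi_deriv.induct) (auto intro: lgi_deriv.intros)

lemma deriv_finite: "lgi_deriv tn S \<Phi> \<Longrightarrow> \<exists>F. F \<subseteq> S \<and> finite F \<and> lgi_deriv tn F \<Phi>"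
proof (induction rule: lgi_deriv.induct)
  case (ax \<Phi>)
  then show ?case by (intro exI[of _ "{}"]) (auto intro: lgi_deriv.intros)
next
  case (hyp \<Phi>)
  then show ?case by (intro exI[of _ "{\<Phi>}"]) (auto intro: lgi_deriv.intros)
next
  case (mp \<Phi> \<Psi>)
  then obtain F1 F2 where "F1 \<subseteq> S" "finite F1" "lgi_deriv tn F1 \<Phi>"
    "F2 \<subseteq> S" "finite F2" "lgi_deriv tn F2 (FImp \<Phi> \<Psi>)" by blast
  then show ?case
    by (intro exI[of _ "F1 \<union> F2"]) (auto intro: lgi_deriv.mp deriv_mono)
qed

lemma taut0: "wf Z \<Longrightarrow> (\<forall>V. bval V Z) \<Longrightarrow> lgi_deriv tn S Z"
  by (rule lgi_deriv.ax, rule lgi_axiom.taut) (simp add: taut_inst_def)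

lemma taut_mp1: "lgi_deriv tn S X \<Longrightarrow> wf X \<Longrightarrow> wf Z \<Longrightarrow> (\<forall>V. bval V X \<longrightarrow> bval V Z)
  \<Longrightarrow> lgi_deriv tn S Z"
  by (rule lgi_deriv.mp[of _ _ X], assumption, rule taut0) (auto simp: FImp_def)

lemma taut_mp2: "lgi_deriv tn S X \<Longrightarrow> lgi_deriv tn S Y \<Longrightarrow> wf X \<Longrightarrow> wf Y \<Longrightarrow> wf Z
  \<Longrightarrow> (\<forall>V. bval V X \<longrightarrow> bval V Y \<longrightarrow> bval V Z) \<Longrightarrow> lgi_deriv tn S Z"
  apply (rule lgi_deriv.mp[of _ _ Y], assumption)
  apply (rule lgi_deriv.mp[of _ _ X], assumption)
  apply (rule taut0) apply (auto simp: FImp_def)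
  done

lemma deduction:
  assumes "lgi_deriv tn (insert A S) B" "is_tnorm tn" "\<forall>\<Phi>\<in>S. wf \<Phi>" "wf A"
  shows "lgi_deriv tn S (FImp A B)"
  using assms(1)
proof (induction rule: lgi_deriv.induct)
  case (ax \<Phi>)
  have "wf \<Phi>" using ax_wf[OF ax assms(2)] .
  with ax show ?case using assms(4)
    by (intro taut_mp1[OF lgi_deriv.ax[OF ax]]) (auto simp: FImp_def)
next
  case (hyp \<Phi>)
  show ?case
  proof (cases "\<Phi> = A")
    case True then show ?thesis using assms(4) by (intro taut0) (auto simp: FImp_def)
  next
    case False then have "\<Phi> \<in> S" using hyp by auto
    then show ?thesis using assms(3,4)
      by (intro taut_mp1[OF lgi_deriv.hyp[OF \<open>\<Phi> \<in> S\<close>]]) (auto simp: FImp_def)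
  qed
next
  case (mp \<Phi> \<Psi>)
  have w: "\<forall>\<Phi>\<in>insert A S. wf \<Phi>" using assms by auto
  have "wf (FImp \<Phi> \<Psi>)" by (rule deriv_wf[OF mp.hyps(2) assms(2) w])
  then show ?case using assms(4)
    by (intro taut_mp2[OF mp.IH]) (auto simp: FImp_def)
qed

lemma lindenbaum:
  assumes tn: "is_tnorm tn" and wT: "\<forall>\<Phi>\<in>T. wf \<Phi>" and nd: "\<not> lgi_deriv tn T \<Phi>0"
  shows "\<exists>M. T \<subseteq> M \<and> (\<forall>\<Phi>\<in>M. wf \<Phi>) \<and> \<not> lgi_deriv tn M \<Phi>0 \<and>
    (\<forall>\<Psi>. wf \<Psi> \<longrightarrow> \<Psi> \<notin> M \<longrightarrow> lgi_deriv tn (insert \<Psi> M) \<Phi>0)"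
proof -
  define A where "A = {S. T \<subseteq> S \<and> (\<forall>\<Phi>\<in>S. wf \<Phi>) \<and> \<not> lgi_deriv tn S \<Phi>0}"
  have "\<forall>C\<in>chains A. \<exists>U\<in>A. \<forall>X\<in>C. X \<subseteq> U"
  proof
    fix C assume C: "C \<in> chains A"
    show "\<exists>U\<in>A. \<forall>X\<in>C. X \<subseteq> U"
    proof (cases "C = {}")
      case True then show ?thesis using assms by (auto simp: A_def)
    next
      case False
      have CA: "C \<subseteq> A" using C by (auto simp: chains_def)
      have "\<Union>C \<in> A"
        unfolding A_def
      proof (intro CollectI conjI)
        show "T \<subseteq> \<Union>C" using False CA by (auto simp: A_def)
        show "\<forall>\<Phi>\<in>\<Union>C. wf \<Phi>" using CA by (auto simp: A_def)
        show "\<not> lgi_deriv tn (\<Union>C) \<Phi>0"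
        proof
          assume "lgi_deriv tn (\<Union>C) \<Phi>0"
          then obtain F where F: "F \<subseteq> \<Union>C" "finite F" "lgi_deriv tn F \<Phi>0"
            using deriv_finite by blast
          have "subset.chain A C" using C by (simp add: chains_alt_def)
          then obtain B where "B \<in> C" "F \<subseteq> B"
            using finite_subset_Union_chain[OF F(2) F(1) False] by blast
          then show False using F(3) CA deriv_mono by (force simp: A_def)
        qed
      qed
      then show ?thesis by blast
    qed
  qed
  then obtain M where M: "M \<in> A" "\<forall>X\<in>A. M \<subseteq> X \<longrightarrow> X = M"
    using Zorn_Lemma2 by blast
  show ?thesis
  proof (intro exI conjI allI impI)
    show "T \<subseteq> M" "\<forall>\<Phi>\<in>M. wf \<Phi>" "\<not> lgi_deriv tn M \<Phi>0" using M(1) by (auto simp: A_def)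
    fix \<Psi> assume "wf \<Psi>" "\<Psi> \<notin> M"
    then have "insert \<Psi> M \<notin> A" using M by blast
    then show "lgi_deriv tn (insert \<Psi> M) \<Phi>0" using M(1) \<open>wf \<Psi>\<close> by (auto simp: A_def)
  qed
qed



lemma dens_lo: "x \<le> 1 \<Longrightarrow> 0 \<le> y \<Longrightarrow> (\<And>c. 0 \<le> c \<Longrightarrow> c < x \<Longrightarrow> c \<le> y) \<Longrightarrow> x \<le> (y::real)"
proof (rule ccontr)
  assume a: "\<And>c. 0 \<le> c \<Longrightarrow> c < x \<Longrightarrow> c \<le> y" "0 \<le> y" "\<not> x \<le> y"
  then have "(x+y)/2 \<le> y" by (intro a(1)) auto
  then show False using a by auto
qed

lemma dens_hi: "0 \<le> x \<Longrightarrow> y \<le> 1 \<Longrightarrow> (\<And>r. r \<le> 1 \<Longrightarrow> x < r \<Longrightarrow> y \<le> r) \<Longrightarrow> y \<le> (x::real)"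
proof (rule ccontr)
  assume a: "\<And>r. r \<le> 1 \<Longrightarrow> x < r \<Longrightarrow> y \<le> r" "y \<le> 1" "\<not> y \<le> x"
  then have "y \<le> (x+y)/2" by (intro a(1)) auto
  then show False using a by auto
qed

locale gi_model =
  fixes tn :: "real \<Rightarrow> real \<Rightarrow> real" and P :: "bexp \<Rightarrow> real \<Rightarrow> bexp \<Rightarrow> bool"
  assumes ctn: "is_cont_tnorm tn"
    and zero: "P \<alpha> 0 \<beta>"
    and refl: "c \<in> {0..1} \<Longrightarrow> P \<alpha> c \<alpha>"
    and trans1: "c \<in> {0..1} \<Longrightarrow> d \<in> {0..1} \<Longrightarrow> P \<alpha> c \<beta> \<Longrightarrow> P \<beta> d \<gamma> \<Longrightarrow> P \<alpha> (luk_and c d) \<gamma>"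
    and trans2: "c \<in> {0..1} \<Longrightarrow> d \<in> {0..1} \<Longrightarrow> P \<alpha> c Bot \<Longrightarrow> P Top d \<beta> \<Longrightarrow> P \<alpha> (luk_or c d) \<beta>"
    and lin2: "d \<in> {0..1} \<Longrightarrow> P Top d \<alpha> \<or> P \<alpha> (1 - d) Bot"
    and inkons: "c \<in> {0..1} \<Longrightarrow> c > 0 \<Longrightarrow> \<not> P Top c Bot"
    and and1: "d \<in> {0..1} \<Longrightarrow> P \<alpha> d \<beta> \<Longrightarrow> P \<alpha> d \<gamma> \<Longrightarrow> P \<alpha> d (BAnd \<beta> \<gamma>)"
    and and2: "P (BAnd \<alpha> \<beta>) 1 \<alpha>"
    and and3: "P (BAnd \<alpha> \<beta>) 1 \<beta>"
    and or1: "d \<in> {0..1} \<Longrightarrow> P \<alpha> d \<gamma> \<Longrightarrow> P \<beta> d \<gamma> \<Longrightarrow> P (BOr \<alpha> \<beta>) d \<gamma>"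
    and or2: "P \<alpha> 1 (BOr \<alpha> \<beta>)"
    and or3: "P \<beta> 1 (BOr \<alpha> \<beta>)"
    and tn1: "c \<in> {0..1} \<Longrightarrow> d \<in> {0..1} \<Longrightarrow> P Top c \<alpha> \<Longrightarrow> P Top d \<beta> \<Longrightarrow> P Top (tn c d) (BTn \<alpha> \<beta>)"
    and tn2: "c \<in> {0..1} \<Longrightarrow> d \<in> {0..1} \<Longrightarrow> P \<alpha> c Bot \<Longrightarrow> P \<beta> d Bot \<Longrightarrow> P (BTn \<alpha> \<beta>) (tconorm tn c d) Bot"
    and neg1: "d \<in> {0..1} \<Longrightarrow> P \<alpha> d \<beta> \<Longrightarrow> P (BNeg \<beta>) d (BNeg \<alpha>)"
    and neg2: "P (BNeg (BNeg \<alpha>)) 1 \<alpha>"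
    and neg3: "P \<alpha> 1 (BNeg (BNeg \<alpha>))"
    and top: "P \<alpha> 1 Top"
    and bot: "P Bot 1 \<alpha>"
begin

definition S :: "bexp \<Rightarrow> real set" where "S \<alpha> = {c. c \<in> {0..1} \<and> P Top c \<alpha>}"
definition val :: "bexp \<Rightarrow> real" where "val \<alpha> = Sup (S \<alpha>)"

lemma S0: "0 \<in> S \<alpha>" by (simp add: S_def zero)
lemma S_bdd: "bdd_above (S \<alpha>)" unfolding S_def by (rule bdd_aboveI[of _ 1]) auto

lemma val_ge0: "0 \<le> val \<alpha>" unfolding val_def by (rule cSup_upper[OF S0 S_bdd])
lemma val_le1: "val \<alpha> \<le> 1" unfolding val_def
proof (rule cSup_least)
  show "S \<alpha> \<noteq> {}" using S0 by auto
qed (auto simp: S_def)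

lemma P_le_val: "c \<in> {0..1} \<Longrightarrow> P Top c \<alpha> \<Longrightarrow> c \<le> val \<alpha>"
  unfolding val_def by (rule cSup_upper[OF _ S_bdd]) (simp add: S_def)

lemma lower: assumes "P \<alpha> c' \<beta>" "c' \<in> {0..1}" "0 \<le> c" "c \<le> c'" shows "P \<alpha> c \<beta>"
proof -
  have "P \<alpha> (luk_and c' (1 - (c' - c))) \<beta>"
    using assms by (intro trans1[OF _ _ _ refl]) auto
  moreover have "luk_and c' (1 - (c' - c)) = c" using assms by (simp add: luk_and_def)
  ultimately show ?thesis by simp
qed

lemma below_val: assumes "0 \<le> c" "c < val \<alpha> \<or> c = 0" shows "P Top c \<alpha>"
  using assms(2)
proof
  assume "c < val \<alpha>"
  have ne: "S \<alpha> \<noteq> {}" using S0 by blast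
  have "\<exists>x\<in>S \<alpha>. c < x" using less_cSup_iff[OF ne S_bdd] \<open>c < val \<alpha>\<close> unfolding val_def by simp
  then obtain x where "x \<in> S \<alpha>" "c < x" by blast
  then have "x \<in> {0..1}" "P Top x \<alpha>" by (auto simp: S_def)
  then show ?thesis using lower[of Top x \<alpha> c] assms(1) \<open>c < x\<close> by simp
qed (simp add: zero)

lemma sound: assumes "c \<in> {0..1}" "P \<alpha> c \<beta>" shows "val \<alpha> \<le> val \<beta> + 1 - c"
proof -
  have "d \<le> val \<beta> + 1 - c" if "d \<in> S \<alpha>" for d
  proof -
    have d: "d \<in> {0..1}" "P Top d \<alpha>" using that by (auto simp: S_def)
    have "P Top (luk_and d c) \<beta>" by (rule trans1[OF d(1) assms(1) d(2) assms(2)])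
    then have "luk_and d c \<le> val \<beta>" using d assms by (intro P_le_val) (auto simp: luk_and_def)
    then show ?thesis by (simp add: luk_and_def)
  qed
  then show ?thesis unfolding val_def[of \<alpha>] using S0 by (intro cSup_least) auto
qed

lemma compl: assumes c: "c \<in> {0..1}" and lt: "val \<alpha> < val \<beta> + 1 - c" shows "P \<alpha> c \<beta>"
proof -
  define g where "g = val \<beta> + 1 - c - val \<alpha>"
  have g: "g > 0" using lt by (simp add: g_def)
  define r where "r = min 1 (val \<alpha> + g/2)"
  define s where "s = max 0 (val \<beta> - g/2)"
  have r01: "r \<in> {0..1}" using val_ge0[of \<alpha>] g by (auto simp: r_def)
  have s01: "s \<in> {0..1}" using val_le1[of \<beta>] g by (auto simp: s_def)
  have Pr: "P \<alpha> (1 - r) Bot"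
  proof (cases "r = 1")
    case True then show ?thesis by (simp add: zero)
  next
    case False
    then have "r > val \<alpha>" using g by (auto simp: r_def)
    then have "\<not> P Top r \<alpha>" using P_le_val r01 by force
    then show ?thesis using lin2[OF r01] by blast
  qed
  have Ps: "P Top s \<beta>"
    using s01 g by (intro below_val) (auto simp: s_def)
  have Pl: "P \<alpha> (luk_or (1 - r) s) \<beta>" using r01 s01 by (intro trans2[OF _ _ Pr Ps]) auto
  have rle: "r \<le> val \<alpha> + g / 2" by (simp add: r_def)
  have sge: "val \<beta> - g / 2 \<le> s" by (simp add: s_def)
  have crs: "c \<le> 1 - r + s" using rle sge g_def by (simp add: field_simps)
  have l1: "c \<le> luk_or (1 - r) s" "luk_or (1 - r) s \<in> {0..1}"
    using r01 s01 c crs unfolding luk_or_def by auto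
  show ?thesis using c l1 by (intro lower[OF Pl]) auto
qed

lemma val_Top: "val Top = 1"
  using P_le_val[OF _ refl[of 1 Top]] val_le1[of Top] by auto

lemma val_Bot: "val Bot = 0"
proof -
  have "val Bot \<le> 0" unfolding val_def using S0
  proof (intro cSup_least)
    fix x assume "x \<in> S Bot" then show "x \<le> 0" using inkons by (force simp: S_def)
  qed auto
  then show ?thesis using val_ge0[of Bot] by simp
qed

lemma val_Var: "val (Var n) \<in> {0..1}" using val_ge0 val_le1 by auto

lemma val_BAnd: "val (BAnd \<alpha> \<beta>) = min (val \<alpha>) (val \<beta>)"
proof -
  have "val (BAnd \<alpha> \<beta>) \<le> val \<alpha>" using sound[OF _ and2] by auto
  moreover have "val (BAnd \<alpha> \<beta>) \<le> val \<beta>" using sound[OF _ and3] by auto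
  moreover have "min (val \<alpha>) (val \<beta>) \<le> val (BAnd \<alpha> \<beta>)"
  proof (rule dens_lo)
    show "min (val \<alpha>) (val \<beta>) \<le> 1" using val_le1 by (simp add: min.coboundedI1)
    show "0 \<le> val (BAnd \<alpha> \<beta>)" by (rule val_ge0)
    fix c assume c: "0 \<le> c" "c < min (val \<alpha>) (val \<beta>)"
    then have c1: "c \<in> {0..1}" using val_le1[of \<alpha>] by auto
    have "P Top c (BAnd \<alpha> \<beta>)" using c by (intro and1[OF c1] below_val) auto
    then show "c \<le> val (BAnd \<alpha> \<beta>)" by (rule P_le_val[OF c1])
  qed
  ultimately show ?thesis by linarith
qed

lemma val_BOr: "val (BOr \<alpha> \<beta>) = max (val \<alpha>) (val \<beta>)"
proof -
  have "val \<alpha> \<le> val (BOr \<alpha> \<beta>)" using sound[OF _ or2] by auto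
  moreover have "val \<beta> \<le> val (BOr \<alpha> \<beta>)" using sound[OF _ or3] by auto
  moreover have "val (BOr \<alpha> \<beta>) \<le> max (val \<alpha>) (val \<beta>)"
  proof (rule dens_hi)
    show "0 \<le> max (val \<alpha>) (val \<beta>)" using val_ge0 by (simp add: max.coboundedI1)
    show "val (BOr \<alpha> \<beta>) \<le> 1" by (rule val_le1)
    fix r assume r: "r \<le> 1" "max (val \<alpha>) (val \<beta>) < r"
    then have r1: "1 - r \<in> {0..1}" using val_ge0[of \<alpha>] by auto
    have "P (BOr \<alpha> \<beta>) (1 - r) Bot" using r val_Bot
      by (intro or1[OF r1] compl[OF r1]) auto
    from sound[OF r1 this] show "val (BOr \<alpha> \<beta>) \<le> r" using val_Bot by simp
  qed
  ultimately show ?thesis by linarith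
qed

lemma P_Top_negBot: "P Top 1 (BNeg Bot)"
proof -
  have "P (BNeg (BNeg Top)) 1 (BNeg Bot)" by (rule neg1[OF _ bot]) simp
  from trans1[OF _ _ neg3 this] show ?thesis by (simp add: luk_and_def)
qed

lemma P_negTop_Bot: "P (BNeg Top) 1 Bot"
proof -
  have "P (BNeg Top) 1 (BNeg (BNeg Bot))" by (rule neg1[OF _ top]) simp
  from trans1[OF _ _ this neg2] show ?thesis by (simp add: luk_and_def)
qed

lemma val_BNeg: "val (BNeg \<alpha>) = 1 - val \<alpha>"
proof -
  have "1 - val \<alpha> \<le> val (BNeg \<alpha>)"
  proof (rule dens_lo)
    show "1 - val \<alpha> \<le> 1" using val_ge0 by simp
    show "0 \<le> val (BNeg \<alpha>)" by (rule val_ge0)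
    fix c assume c: "0 \<le> c" "c < 1 - val \<alpha>"
    then have c1: "c \<in> {0..1}" using val_ge0[of \<alpha>] by auto
    have "P \<alpha> c Bot" using c val_Bot by (intro compl[OF c1]) auto
    then have "P (BNeg Bot) c (BNeg \<alpha>)" by (rule neg1[OF c1])
    from trans1[OF _ c1 P_Top_negBot this] have "P Top c (BNeg \<alpha>)"
      using c1 by (simp add: luk_and_def)
    then show "c \<le> val (BNeg \<alpha>)" by (rule P_le_val[OF c1])
  qed
  moreover have "val \<alpha> \<le> 1 - val (BNeg \<alpha>)"
  proof (rule dens_lo)
    show "val \<alpha> \<le> 1" by (rule val_le1)
    show "0 \<le> 1 - val (BNeg \<alpha>)" using val_le1 by simp
    fix c assume c: "0 \<le> c" "c < val \<alpha>"
    then have c1: "c \<in> {0..1}" using val_le1[of \<alpha>] by auto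
    have "P Top c \<alpha>" using c by (intro below_val) auto
    then have "P (BNeg \<alpha>) c (BNeg Top)" by (rule neg1[OF c1])
    from trans1[OF c1 _ this P_negTop_Bot] have "P (BNeg \<alpha>) c Bot"
      using c1 by (simp add: luk_and_def)
    from sound[OF c1 this] show "c \<le> 1 - val (BNeg \<alpha>)" using val_Bot by simp
  qed
  ultimately show ?thesis by linarith
qed

lemma tn_cont_lim:
  assumes "X \<longlonglongrightarrow> u" "Y \<longlonglongrightarrow> w" "u \<in> {0..1}" "w \<in> {0..1}"
    "\<And>n. X n \<in> {0..1}" "\<And>n. Y n \<in> {0..1}"
  shows "(\<lambda>n. tn (X n) (Y n)) \<longlonglongrightarrow> tn u w"
proof -
  have c: "continuous_on ({0..1} \<times> {0..1}) (\<lambda>(x, y). tn x y)"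
    using ctn by (simp add: is_cont_tnorm_def)
  have tP: "(\<lambda>n. (X n, Y n)) \<longlonglongrightarrow> (u, w)" using assms(1,2) by (rule tendsto_Pair)
  have l: "(u, w) \<in> {0..1} \<times> {0..1}" using assms(3,4) by blast
  have ev: "\<forall>\<^sub>F n in sequentially. (X n, Y n) \<in> {0..1} \<times> {0..1}"
    using assms(5,6) by (intro always_eventually allI) blast
  from continuous_on_tendsto_compose[OF c tP l ev] show ?thesis by simp
qed

lemma val_BTn: "val (BTn \<alpha> \<beta>) = tn (val \<alpha>) (val \<beta>)"
proof -
  have tnr: "is_tnorm tn" using ctn by (simp add: is_cont_tnorm_def)
  define u where "u = val \<alpha>"
  define w where "w = val \<beta>"
  have u01: "u \<in> {0..1}" "w \<in> {0..1}" using val_ge0 val_le1 by (auto simp: u_def w_def)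
  have inv: "0 < inverse (real (Suc n))" "inverse (real (Suc n)) \<le> 1" for n by (auto simp: inverse_le_1_iff)
  define X where "X n = u - u * inverse (real (Suc n))" for n
  define Y where "Y n = w - w * inverse (real (Suc n))" for n
  have XL: "X \<longlonglongrightarrow> u" unfolding X_def
    using tendsto_diff[OF tendsto_const tendsto_mult_right_zero[OF LIMSEQ_inverse_real_of_nat]] by simp
  have YL: "Y \<longlonglongrightarrow> w" unfolding Y_def
    using tendsto_diff[OF tendsto_const tendsto_mult_right_zero[OF LIMSEQ_inverse_real_of_nat]] by simp
  have Xp: "X n \<in> {0..1} \<and> (X n < u \<or> X n = 0)" for n
  proof -
    have "u * inverse (real (Suc n)) \<le> u * 1" using u01 inv[of n] by (intro mult_left_mono) auto
    moreover have "u > 0 \<Longrightarrow> 0 < u * inverse (real (Suc n))" using inv[of n] by simp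
    moreover have "0 \<le> u * inverse (real (Suc n))" using inv[of n] u01 by simp
    ultimately show ?thesis using u01 unfolding X_def by (cases "u = 0") auto
  qed
  have Yp: "Y n \<in> {0..1} \<and> (Y n < w \<or> Y n = 0)" for n
  proof -
    have "w * inverse (real (Suc n)) \<le> w * 1" using u01 inv[of n] by (intro mult_left_mono) auto
    moreover have "w > 0 \<Longrightarrow> 0 < w * inverse (real (Suc n))" using inv[of n] by simp
    moreover have "0 \<le> w * inverse (real (Suc n))" using inv[of n] u01 by simp
    ultimately show ?thesis using u01 unfolding Y_def by (cases "w = 0") auto
  qed
  have lo: "tn u w \<le> val (BTn \<alpha> \<beta>)"
  proof (rule LIMSEQ_le_const2[OF tn_cont_lim[OF XL YL u01]])
    show "X n \<in> {0..1}" "Y n \<in> {0..1}" for n using Xp Yp by auto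
    have "tn (X n) (Y n) \<le> val (BTn \<alpha> \<beta>)" for n
    proof (rule P_le_val)
      show "tn (X n) (Y n) \<in> {0..1}" using tnorm_range[OF tnr] Xp Yp by blast
      show "P Top (tn (X n) (Y n)) (BTn \<alpha> \<beta>)"
        using Xp[of n] Yp[of n] by (intro tn1 below_val) (auto simp: u_def w_def)
    qed
    then show "\<exists>N. \<forall>n\<ge>N. tn (X n) (Y n) \<le> val (BTn \<alpha> \<beta>)" by blast
  qed
  define X' where "X' n = u + (1 - u) * inverse (real (Suc n))" for n
  define Y' where "Y' n = w + (1 - w) * inverse (real (Suc n))" for n
  have XL': "X' \<longlonglongrightarrow> u" unfolding X'_def
    using tendsto_add[OF tendsto_const tendsto_mult_right_zero[OF LIMSEQ_inverse_real_of_nat]] by simp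
  have YL': "Y' \<longlonglongrightarrow> w" unfolding Y'_def
    using tendsto_add[OF tendsto_const tendsto_mult_right_zero[OF LIMSEQ_inverse_real_of_nat]] by simp
  have Xp': "X' n \<in> {0..1} \<and> (u < X' n \<or> X' n = 1)" for n
  proof -
    have "(1 - u) * inverse (real (Suc n)) \<le> (1 - u) * 1" using u01 inv[of n] by (intro mult_left_mono) auto
    moreover have "u < 1 \<Longrightarrow> 0 < (1 - u) * inverse (real (Suc n))" using inv[of n] by simp
    moreover have "0 \<le> (1 - u) * inverse (real (Suc n))" using u01 inv[of n] by simp
    ultimately show ?thesis using u01 unfolding X'_def by (cases "u = 1") auto
  qed
  have Yp': "Y' n \<in> {0..1} \<and> (w < Y' n \<or> Y' n = 1)" for n
  proof -
    have "(1 - w) * inverse (real (Suc n)) \<le> (1 - w) * 1" using u01 inv[of n] by (intro mult_left_mono) auto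
    moreover have "w < 1 \<Longrightarrow> 0 < (1 - w) * inverse (real (Suc n))" using inv[of n] by simp
    moreover have "0 \<le> (1 - w) * inverse (real (Suc n))" using u01 inv[of n] by simp
    ultimately show ?thesis using u01 unfolding Y'_def by (cases "w = 1") auto
  qed
  have downP: "P \<gamma> (1 - x) Bot" if "x \<in> {0..1}" "val \<gamma> < x \<or> x = 1" for \<gamma> x
    using that(2)
  proof
    assume "val \<gamma> < x" then show ?thesis using that val_Bot by (intro compl) auto
  qed (simp add: zero)
  have hi: "val (BTn \<alpha> \<beta>) \<le> tn u w"
  proof (rule LIMSEQ_le_const[OF tn_cont_lim[OF XL' YL' u01]])
    show "X' n \<in> {0..1}" "Y' n \<in> {0..1}" for n using Xp' Yp' by auto
    have "val (BTn \<alpha> \<beta>) \<le> tn (X' n) (Y' n)" for n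
    proof -
      have a: "P \<alpha> (1 - X' n) Bot" using Xp'[of n] by (intro downP) (auto simp: u_def)
      have b: "P \<beta> (1 - Y' n) Bot" using Yp'[of n] by (intro downP) (auto simp: w_def)
      have r1: "1 - X' n \<in> {0..1}" "1 - Y' n \<in> {0..1}" using Xp'[of n] Yp'[of n] by auto
      have "tn (X' n) (Y' n) \<in> {0..1}" using tnorm_range[OF tnr] Xp' Yp' by blast
      then have r2: "tconorm tn (1 - X' n) (1 - Y' n) \<in> {0..1}" by (simp add: tconorm_def)
      from sound[OF r2 tn2[OF r1 a b]] show ?thesis using val_Bot by (simp add: tconorm_def)
    qed
    then show "\<exists>N. \<forall>n\<ge>N. val (BTn \<alpha> \<beta>) \<le> tn (X' n) (Y' n)" by blast
  qed
  show ?thesis using lo hi by (simp add: u_def w_def)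
qed

lemma eval_val: "eval tn (\<lambda>n. val (Var n)) \<alpha> = val \<alpha>"
  by (induction \<alpha>) (simp_all add: val_Top val_Bot val_BAnd val_BOr val_BNeg val_BTn)

end



theorem mainTheorem6:
  fixes tn :: "real \<Rightarrow> real \<Rightarrow> real"
    and T :: "fml set" and \<zeta> \<eta> :: bexp and e t :: real
  assumes "is_cont_tnorm tn"
    and "\<forall>\<Phi>\<in>T. \<exists>\<alpha> c \<beta>. \<Phi> = GI \<alpha> c \<beta> \<and> c \<in> {0..1}"
    and "e \<in> {0..1}"
    and "entails tn T (GI \<zeta> e \<eta>)"
    and "t \<in> {0..1}" and "t < e"
  shows "lgi_deriv tn T (GI \<zeta> t \<eta>)"
proof (rule ccontr)
  define \<Phi>0 where "\<Phi>0 = GI \<zeta> t \<eta>"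
  assume nd0: "\<not> lgi_deriv tn T (GI \<zeta> t \<eta>)"
  have tnr: "is_tnorm tn" using assms(1) by (simp add: is_cont_tnorm_def)
  have wT: "\<forall>\<Phi>\<in>T. wf \<Phi>" using assms(2) by force
  have w0: "wf \<Phi>0" using assms(5) by (simp add: \<Phi>0_def)
  obtain M where M: "T \<subseteq> M" "\<forall>\<Phi>\<in>M. wf \<Phi>" "\<not> lgi_deriv tn M \<Phi>0"
    "\<And>\<Psi>. wf \<Psi> \<Longrightarrow> \<Psi> \<notin> M \<Longrightarrow> lgi_deriv tn (insert \<Psi> M) \<Phi>0"
    using lindenbaum[OF tnr wT nd0[folded \<Phi>0_def]] by blast
  have imp0: "lgi_deriv tn M (FImp \<Psi> \<Phi>0)" if "wf \<Psi>" "\<Psi> \<notin> M" for \<Psi>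
    using deduction[OF M(4)[OF that] tnr M(2) that(1)] .
  have closed: "\<Psi> \<in> M" if "lgi_deriv tn M \<Psi>" for \<Psi>
  proof (rule ccontr)
    assume "\<Psi> \<notin> M"
    moreover have "wf \<Psi>" using deriv_wf[OF that tnr M(2)] .
    ultimately have "lgi_deriv tn M \<Phi>0" using lgi_deriv.mp[OF that imp0] by blast
    then show False using M(3) by blast
  qed
  have axin: "\<Phi> \<in> M" if "lgi_axiom tn \<Phi>" for \<Phi>
    using closed[OF lgi_deriv.ax[OF that]] .
  have notboth: False if "FNot \<Psi> \<in> M" "\<Psi> \<in> M" for \<Psi>
  proof -
    have "wf \<Psi>" using that M(2) by auto
    then have "lgi_deriv tn M \<Phi>0" using that w0
      by (intro taut_mp2[OF lgi_deriv.hyp[OF that(1)] lgi_deriv.hyp[OF that(2)]]) auto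
    then show False using M(3) by blast
  qed
  have compl: "FNot \<Psi> \<in> M" if "wf \<Psi>" "\<Psi> \<notin> M" for \<Psi>
  proof (rule ccontr)
    assume "FNot \<Psi> \<notin> M"
    then have a: "lgi_deriv tn M (FImp (FNot \<Psi>) \<Phi>0)" using imp0 that by simp
    have b: "lgi_deriv tn M (FImp \<Psi> \<Phi>0)" using imp0 that by simp
    have "lgi_deriv tn M \<Phi>0" using that w0
      by (intro taut_mp2[OF a b]) (auto simp: FImp_def)
    then show False using M(3) by blast
  qed
  have impin: "B \<in> M" if "FImp A B \<in> M" "A \<in> M" for A B
    using closed[OF lgi_deriv.mp[OF lgi_deriv.hyp[OF that(2)] lgi_deriv.hyp[OF that(1)]]] .
  have andin: "FAnd A B \<in> M" if "A \<in> M" "B \<in> M" for A B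
    using that M(2) by (intro closed taut_mp2[OF lgi_deriv.hyp[OF that(1)] lgi_deriv.hyp[OF that(2)]]) auto
  have orin: "A \<in> M \<or> B \<in> M" if "FOr A B \<in> M" for A B
  proof (rule ccontr)
    assume n: "\<not> (A \<in> M \<or> B \<in> M)"
    have w: "wf A" "wf B" using that M(2) by auto
    then have "FNot A \<in> M" using n compl by blast
    then have "B \<in> M" using that w
      by (intro closed taut_mp2[OF lgi_deriv.hyp[OF that] lgi_deriv.hyp[OF \<open>FNot A \<in> M\<close>]]) auto
    then show False using n by blast
  qed
  have mp2: "C \<in> M" if "FImp (FAnd A B) C \<in> M" "A \<in> M" "B \<in> M" for A B C
    by (rule impin[OF that(1) andin[OF that(2,3)]])
  let ?P = "\<lambda>\<alpha> c \<beta>. GI \<alpha> c \<beta> \<in> M"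
  have h_zero: "\<And>\<alpha> \<beta>. ?P \<alpha> 0 \<beta>" by (rule axin[OF lgi_axiom.zero])
  have h_refl: "\<And>c \<alpha>. c \<in> {0..1} \<Longrightarrow> ?P \<alpha> c \<alpha>" by (rule axin[OF lgi_axiom.refl])
  have h_trans1: "\<And>c d \<alpha> \<beta> \<gamma>. c \<in> {0..1} \<Longrightarrow> d \<in> {0..1} \<Longrightarrow> ?P \<alpha> c \<beta> \<Longrightarrow> ?P \<beta> d \<gamma> \<Longrightarrow> ?P \<alpha> (luk_and c d) \<gamma>"
    by (rule mp2[OF axin[OF lgi_axiom.trans1]])
  have h_trans2: "\<And>c d \<alpha> \<beta>. c \<in> {0..1} \<Longrightarrow> d \<in> {0..1} \<Longrightarrow> ?P \<alpha> c Bot \<Longrightarrow> ?P Top d \<beta> \<Longrightarrow> ?P \<alpha> (luk_or c d) \<beta>"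
    by (rule mp2[OF axin[OF lgi_axiom.trans2]])
  have h_lin2: "\<And>d \<alpha>. d \<in> {0..1} \<Longrightarrow> ?P Top d \<alpha> \<or> ?P \<alpha> (1 - d) Bot"
    by (rule orin[OF axin[OF lgi_axiom.lin2]])
  have h_inkons: "\<And>c. c \<in> {0..1} \<Longrightarrow> c > 0 \<Longrightarrow> \<not> ?P Top c Bot"
    using notboth[OF axin[OF lgi_axiom.inkons]] by blast
  have h_and1: "\<And>d \<alpha> \<beta> \<gamma>. d \<in> {0..1} \<Longrightarrow> ?P \<alpha> d \<beta> \<Longrightarrow> ?P \<alpha> d \<gamma> \<Longrightarrow> ?P \<alpha> d (BAnd \<beta> \<gamma>)"
    by (rule mp2[OF axin[OF lgi_axiom.and1]])
  have h_and2: "\<And>\<alpha> \<beta>. ?P (BAnd \<alpha> \<beta>) 1 \<alpha>" by (rule axin[OF lgi_axiom.and2])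
  have h_and3: "\<And>\<alpha> \<beta>. ?P (BAnd \<alpha> \<beta>) 1 \<beta>" by (rule axin[OF lgi_axiom.and3])
  have h_or1: "\<And>d \<alpha> \<beta> \<gamma>. d \<in> {0..1} \<Longrightarrow> ?P \<alpha> d \<gamma> \<Longrightarrow> ?P \<beta> d \<gamma> \<Longrightarrow> ?P (BOr \<alpha> \<beta>) d \<gamma>"
    by (rule mp2[OF axin[OF lgi_axiom.or1]])
  have h_or2: "\<And>\<alpha> \<beta>. ?P \<alpha> 1 (BOr \<alpha> \<beta>)" by (rule axin[OF lgi_axiom.or2])
  have h_or3: "\<And>\<alpha> \<beta>. ?P \<beta> 1 (BOr \<alpha> \<beta>)" by (rule axin[OF lgi_axiom.or3])
  have h_tn1: "\<And>c d \<alpha> \<beta>. c \<in> {0..1} \<Longrightarrow> d \<in> {0..1} \<Longrightarrow> ?P Top c \<alpha> \<Longrightarrow> ?P Top d \<beta> \<Longrightarrow> ?P Top (tn c d) (BTn \<alpha> \<beta>)"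
    by (rule mp2[OF axin[OF lgi_axiom.tn1]])
  have h_tn2: "\<And>c d \<alpha> \<beta>. c \<in> {0..1} \<Longrightarrow> d \<in> {0..1} \<Longrightarrow> ?P \<alpha> c Bot \<Longrightarrow> ?P \<beta> d Bot \<Longrightarrow> ?P (BTn \<alpha> \<beta>) (tconorm tn c d) Bot"
    by (rule mp2[OF axin[OF lgi_axiom.tn2]])
  have h_neg1: "\<And>d \<alpha> \<beta>. d \<in> {0..1} \<Longrightarrow> ?P \<alpha> d \<beta> \<Longrightarrow> ?P (BNeg \<beta>) d (BNeg \<alpha>)"
    by (rule impin[OF axin[OF lgi_axiom.neg1]])
  have h_neg2: "\<And>\<alpha>. ?P (BNeg (BNeg \<alpha>)) 1 \<alpha>" by (rule axin[OF lgi_axiom.neg2])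
  have h_neg3: "\<And>\<alpha>. ?P \<alpha> 1 (BNeg (BNeg \<alpha>))" by (rule axin[OF lgi_axiom.neg3])
  have h_top: "\<And>\<alpha>. ?P \<alpha> 1 Top" by (rule axin[OF lgi_axiom.top])
  have h_bot: "\<And>\<alpha>. ?P Bot 1 \<alpha>" by (rule axin[OF lgi_axiom.bot])
  interpret gm: gi_model tn ?P
    by (rule gi_model.intro[OF assms(1) h_zero h_refl h_trans1 h_trans2 h_lin2 h_inkons
      h_and1 h_and2 h_and3 h_or1 h_or2 h_or3 h_tn1 h_tn2 h_neg1 h_neg2 h_neg3 h_top h_bot])
  have a01: "\<forall>n. gm.val (Var n) \<in> {0..1}" using gm.val_Var by blast
  have satT: "\<forall>\<Psi>\<in>T. sat tn (\<lambda>n. gm.val (Var n)) \<Psi>"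
  proof
    fix \<Psi> assume "\<Psi> \<in> T"
    then obtain \<alpha> c \<beta> where "\<Psi> = GI \<alpha> c \<beta>" "c \<in> {0..1}" using assms(2) by blast
    moreover have "GI \<alpha> c \<beta> \<in> M" using \<open>\<Psi> \<in> T\<close> M(1) calculation by auto
    ultimately show "sat tn (\<lambda>n. gm.val (Var n)) \<Psi>"
      using gm.sound[of c \<alpha> \<beta>] by (simp add: gm.eval_val)
  qed
  have a01': "\<And>n. gm.val (Var n) \<in> {0..1}" using a01 by blast
  have satT': "\<And>\<Psi>. \<Psi> \<in> T \<Longrightarrow> sat tn (\<lambda>n. gm.val (Var n)) \<Psi>" using satT by blast
  have "sat tn (\<lambda>n. gm.val (Var n)) (GI \<zeta> e \<eta>)"
    by (rule assms(4)[unfolded entails_def, rule_format, OF a01' satT'])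
  then have "gm.val \<zeta> < gm.val \<eta> + 1 - t" using assms(6) by (simp add: gm.eval_val)
  then have "GI \<zeta> t \<eta> \<in> M" using gm.compl[OF assms(5)] by blast
  then show False using M(3) lgi_deriv.hyp unfolding \<Phi>0_def by blast
qed

end
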